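(* Let $K\ge1$, $M\ge 1$, let $u_1,\dots,u_K\in\mathbb{R}$, and write $u_k^+=\max\{u_k,0\}$, $u_k^-=\max\{-u_k,0\}$, $S_+=\sum_k u_k^+$, $S_-=\sum_k u_k^-$, $s=\sum_k u_k$. Fix $\eta>0$, $\sigma_z^2>0$, $\mu_1,\dots,\mu_K>0$, and deterministic weights $c_1,\dots,c_M\ge 0$ with $C_M=\sum_{m=1}^M c_m>0$. For $k=1,\dots,K$, $m=1,\dots,M$ and branch $\pm$, let $h_{k,m,\pm}\sim\mathcal{CN}(0,\mu_k^2)$, $z_{m,\pm}\sim\mathcal{CN}(0,\sigma_z^2)$ and $\phi_{k,m,\pm}\sim\mathrm{Unif}[0,2\pi)$, all mutually independent (across transmitters, branches and chips). Define $$a_{k,m,+}=\frac{\sqrt{\eta c_m u_k^+}}{\mu_k}e^{\mathrm{i}\phi_{k,m,+}},\qquad a_{k,m,-}=\frac{\sqrt{\eta c_m u_k^-}}{\mu_k}e^{\mathrm{i}\phi_{k,m,-}},$$ $y_{m,\pm}=\sum_{k=1}^K h_{k,m,\pm}a_{k,m,\pm}+z_{m,\pm}$, and $$\hat s_M=\frac{1}{\eta C_M}\sum_{m=1}^M\left(|y_{m,+}|^2-|y_{m,-}|^2\right).$$ Then $\mathbb{E}[\hat s_M]=s$ and $$\mathrm{Var}(\hat s_M)=\frac{\sum_{m=1}^M c_m^2}{C_M^2}\left(S_+^2+S_-^2\right)+\frac{2\sigma_z^2}{\eta C_M}\sum_{k=1}^K|u_k|+\frac{2M\sigma_z^4}{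\eta^2C_M^2}.$$
   Context: $\mathcal{CN}(0,\nu)$ denotes the circularly symmetric complex Gaussian distribution with variance $\nu$; $\mathrm{i}$ is the imaginary unit. *)

theory Defs
  imports "HOL-Probability.Probability"
begin

definition CN_density :: "real \<Rightarrow> complex \<Rightarrow> ennreal" where
  "CN_density nu z = ennreal (exp (- (cmod z)\<^sup>2 / nu) / (pi * nu))"

definition unif_phase_density :: "real \<Rightarrow> ennreal" where
  "unif_phase_density x = ennreal (indicator {0..<2*pi} x / (2*pi))"

text \<open>Indices of the random sources: channel h_{k,m,b}, noise z_{m,b}, phase phi_{k,m,b};
  the Boolean b is the branch (True = +, False = -).\<close>
datatype src = SrcH nat nat bool | SrcZ nat bool | SrcPhi nat nat bool

definition src_index :: "nat \<Rightarrow> nat \<Rightarrow> src set" where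
  "src_index K M =
     {SrcH k m b | k m b. k \<in> {1..K} \<and> m \<in> {1..M}} \<union>
     {SrcZ m b | m b. m \<in> {1..M}} \<union>
     {SrcPhi k m b | k m b. k \<in> {1..K} \<and> m \<in> {1..M}}"

text \<open>The family of all sources; phases are embedded into complex via of_real
  (an injective measurable embedding) so that all sources share one value type.\<close>
definition src_family ::
  "(nat \<Rightarrow> nat \<Rightarrow> bool \<Rightarrow> 'a \<Rightarrow> complex) \<Rightarrow> (nat \<Rightarrow> bool \<Rightarrow> 'a \<Rightarrow> complex) \<Rightarrow>
   (nat \<Rightarrow> nat \<Rightarrow> bool \<Rightarrow> 'a \<Rightarrow> real) \<Rightarrow> src \<Rightarrow> 'a \<Rightarrow> complex" where
  "src_family h z phi i = (case i of
      SrcH k m b \<Rightarrow> h k m b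
    | SrcZ m b \<Rightarrow> z m b
    | SrcPhi k m b \<Rightarrow> (\<lambda>\<omega>. complex_of_real (phi k m b \<omega>)))"

definition upos :: "real \<Rightarrow> real" where "upos x = max x 0"
definition uneg :: "real \<Rightarrow> real" where "uneg x = max (- x) 0"

definition coef ::
  "real \<Rightarrow> (nat \<Rightarrow> real) \<Rightarrow> (nat \<Rightarrow> real) \<Rightarrow> (nat \<Rightarrow> real) \<Rightarrow>
   (nat \<Rightarrow> nat \<Rightarrow> bool \<Rightarrow> 'a \<Rightarrow> real) \<Rightarrow> nat \<Rightarrow> nat \<Rightarrow> bool \<Rightarrow> 'a \<Rightarrow> complex" where
  "coef \<eta> c u \<mu> phi k m b \<omega> =
     complex_of_real (sqrt (\<eta> * c m * (if b then upos (u k) else uneg (u k))) / \<mu> k)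
     * exp (\<i> * complex_of_real (phi k m b \<omega>))"

definition rx ::
  "nat \<Rightarrow> real \<Rightarrow> (nat \<Rightarrow> real) \<Rightarrow> (nat \<Rightarrow> real) \<Rightarrow> (nat \<Rightarrow> real) \<Rightarrow>
   (nat \<Rightarrow> nat \<Rightarrow> bool \<Rightarrow> 'a \<Rightarrow> complex) \<Rightarrow> (nat \<Rightarrow> bool \<Rightarrow> 'a \<Rightarrow> complex) \<Rightarrow>
   (nat \<Rightarrow> nat \<Rightarrow> bool \<Rightarrow> 'a \<Rightarrow> real) \<Rightarrow> nat \<Rightarrow> bool \<Rightarrow> 'a \<Rightarrow> complex" where
  "rx K \<eta> c u \<mu> h z phi m b \<omega> =
     (\<Sum>k\<in>{1..K}. h k m b \<omega> * coef \<eta> c u \<mu> phi k m b \<omega>) + z m b \<omega>"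

definition s_hat ::
  "nat \<Rightarrow> nat \<Rightarrow> real \<Rightarrow> (nat \<Rightarrow> real) \<Rightarrow> (nat \<Rightarrow> real) \<Rightarrow> (nat \<Rightarrow> real) \<Rightarrow>
   (nat \<Rightarrow> nat \<Rightarrow> bool \<Rightarrow> 'a \<Rightarrow> complex) \<Rightarrow> (nat \<Rightarrow> bool \<Rightarrow> 'a \<Rightarrow> complex) \<Rightarrow>
   (nat \<Rightarrow> nat \<Rightarrow> bool \<Rightarrow> 'a \<Rightarrow> real) \<Rightarrow> 'a \<Rightarrow> real" where
  "s_hat K M \<eta> c u \<mu> h z phi \<omega> =
     1 / (\<eta> * (\<Sum>m\<in>{1..M}. c m)) *
     (\<Sum>m\<in>{1..M}. (cmod (rx K \<eta> c u \<mu> h z phi m True \<omega>))\<^sup>2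
                  - (cmod (rx K \<eta> c u \<mu> h z phi m False \<omega>))\<^sup>2)"

end

theory Submission
  imports Defs
begin


definition cpl :: "real \<times> real \<Rightarrow> complex" where "cpl p = Complex (fst p) (snd p)"

lemma cpl_cont: "continuous_on UNIV cpl"
  unfolding cpl_def Complex_eq by (intro continuous_intros)

lemma cpl_measurable: "cpl \<in> borel_measurable borel"
  by (rule borel_measurable_continuous_onI[OF cpl_cont])

lemma cpl_measurable2[measurable]: "cpl \<in> borel_measurable (lborel \<Otimes>\<^sub>M lborel)"
  using cpl_measurable by (simp add: lborel_prod)

lemma lborel_complex: "(lborel :: complex measure) = distr (lborel \<Otimes>\<^sub>M lborel) borel cpl"
proof (rule lborel_eqI)
  fix l u :: complex assume le: "\<And>b. b \<in> Basis \<Longrightarrow> l \<bullet> b \<le> u \<bullet> b"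
  then have le1: "Re l \<le> Re u" and le2: "Im l \<le> Im u"
    using le[of 1] le[of \<i>] by auto
  have eq: "cpl -` box l u \<inter> space (lborel \<Otimes>\<^sub>M lborel) = {Re l<..<Re u} \<times> {Im l<..<Im u}"
    by (auto simp: cpl_def box_def Basis_complex_def space_pair_measure)
  have "emeasure (distr (lborel \<Otimes>\<^sub>M lborel) borel cpl) (box l u) = 
     emeasure (lborel \<Otimes>\<^sub>M lborel) ({Re l<..<Re u} \<times> {Im l<..<Im u})"
    by (subst emeasure_distr) (auto simp: eq)
  also have "\<dots> = ennreal (Re u - Re l) * ennreal (Im u - Im l)"
    using le1 le2 by (simp add: lborel.emeasure_pair_measure_Times)
  finally show "emeasure (distr (lborel \<Otimes>\<^sub>M lborel) borel cpl) (box l u) = (\<Prod>b\<in>Basis. (u - l) \<bullet> b)"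
    using le1 le2 by (simp add: Basis_complex_def ennreal_mult)
qed simp



lemma integrable_prod_mult:
  fixes f g :: "_ \<Rightarrow> real"
  assumes "sigma_finite_measure M1" "sigma_finite_measure M2"
  assumes f: "integrable M1 f" and g: "integrable M2 g"
  shows "integrable (M1 \<Otimes>\<^sub>M M2) (\<lambda>x. f (fst x) * g (snd x))"
    and "(\<integral>x. f (fst x) * g (snd x) \<partial>(M1 \<Otimes>\<^sub>M M2)) = integral\<^sup>L M1 f * integral\<^sup>L M2 g"
proof -
  interpret pair_sigma_finite M1 M2 using assms(1,2) by (simp add: pair_sigma_finite_def)
  have [measurable]: "f \<in> borel_measurable M1" "g \<in> borel_measurable M2" using f g by auto
  show int: "integrable (M1 \<Otimes>\<^sub>M M2) (\<lambda>x. f (fst x) * g (snd x))"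
  proof (rule Fubini_integrable)
    show "integrable M1 (\<lambda>x. \<integral>y. norm (f (fst (x, y)) * g (snd (x, y))) \<partial>M2)"
      using f g by (simp add: abs_mult)
    show "AE x in M1. integrable M2 (\<lambda>y. f (fst (x, y)) * g (snd (x, y)))"
      using g by simp
  qed measurable
  have "integral\<^sup>L (M1 \<Otimes>\<^sub>M M2) (\<lambda>x. f (fst x) * g (snd x)) = (\<integral>x. (\<integral>y. f (fst (x, y)) * g (snd (x, y)) \<partial>M2) \<partial>M1)"
    using integral_fst'[OF int] by simp
  also have "\<dots> = integral\<^sup>L M1 f * integral\<^sup>L M2 g"
    by simp
  finally show "(\<integral>x. f (fst x) * g (snd x) \<partial>(M1 \<Otimes>\<^sub>M M2)) = integral\<^sup>L M1 f * integral\<^sup>L M2 g" .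
qed



definition NN :: "real \<Rightarrow> real measure" where
  "NN s = density lborel (\<lambda>x. ennreal (normal_density 0 s x))"

lemma prob_NN: "s > 0 \<Longrightarrow> prob_space (NN s)"
  unfolding NN_def by (rule prob_space_normal_density)

lemma sets_NN[measurable_cong, simp]: "sets (NN s) = sets borel"
  by (simp add: NN_def)

lemma CN_eq:
  assumes nu: "nu > 0"
  defines "s \<equiv> sqrt (nu / 2)"
  shows "density lborel (CN_density nu) = distr (NN s \<Otimes>\<^sub>M NN s) borel cpl"
proof -
  have s: "s > 0" using nu by (simp add: s_def)
  have s2: "s\<^sup>2 = nu / 2" using nu by (simp add: s_def)
  interpret N: prob_space "NN s" using prob_NN[OF s] .
  have CNm[measurable]: "CN_density nu \<in> borel_measurable borel"
    unfolding CN_density_def by measurable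
  have "density lborel (CN_density nu) = density (distr (lborel \<Otimes>\<^sub>M lborel) borel cpl) (CN_density nu)"
    by (simp add: lborel_complex[symmetric])
  also have "\<dots> = distr (density (lborel \<Otimes>\<^sub>M lborel) (\<lambda>x. CN_density nu (cpl x))) borel cpl"
    by (rule density_distr) measurable
  also have "(\<lambda>x. CN_density nu (cpl x)) = (\<lambda>(x,y). ennreal (normal_density 0 s x) * ennreal (normal_density 0 s y))"
  proof (intro ext, clarify)
    fix a b :: real
    have "exp (- (cmod (Complex a b))\<^sup>2 / nu) / (pi * nu) = normal_density 0 s a * normal_density 0 s b"
      unfolding normal_density_def s2 cmod_def using nu
      by (simp add: field_simps real_sqrt_mult[symmetric] exp_add[symmetric] power2_eq_square)
    then show "CN_density nu (cpl (a, b)) = ennreal (normal_density 0 s a) * ennreal (normal_density 0 s b)"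
      by (simp add: CN_density_def cpl_def ennreal_mult[symmetric])
  qed
  also have "density (lborel \<Otimes>\<^sub>M lborel) (\<lambda>(x,y). ennreal (normal_density 0 s x) * ennreal (normal_density 0 s y)) = NN s \<Otimes>\<^sub>M NN s"
    unfolding NN_def
    by (rule pair_measure_density[symmetric]) (auto intro: lborel.sigma_finite_measure_axioms N.sigma_finite_measure_axioms[unfolded NN_def])
  finally show ?thesis .
qed



lemma NN_mom:
  assumes s: "s > 0"
  shows "integrable (NN s) (\<lambda>x. x ^ k)"
    and "(\<integral>x. x ^ 0 \<partial>NN s) = 1" "(\<integral>x. x ^ 1 \<partial>NN s) = 0" "(\<integral>x. x ^ 2 \<partial>NN s) = s\<^sup>2"
        "(\<integral>x. x ^ 3 \<partial>NN s) = 0" "(\<integral>x. x ^ 4 \<partial>NN s) = 3 * s ^ 4"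
proof -
  have I: "integral\<^sup>L (NN s) f = (\<integral>x. normal_density 0 s x * f x \<partial>lborel)" if [measurable]: "f \<in> borel_measurable borel" for f :: "real \<Rightarrow> real"
    unfolding NN_def by (subst integral_density) auto
  show "integrable (NN s) (\<lambda>x. x ^ k)"
    unfolding NN_def using integrable_normal_moment[OF s, of 0 k]
    by (subst integrable_density) auto
  have e: "(\<integral>x. normal_density 0 s x * x ^ (2*k) \<partial>lborel) = fact (2 * k) / ((2 / s\<^sup>2)^k * fact k)" for k
    using has_bochner_integral_integral_eq[OF normal_moment_even[OF s, of 0 k]] by simp
  have o: "(\<integral>x. normal_density 0 s x * x ^ (2*k+1) \<partial>lborel) = 0" for k
    using has_bochner_integral_integral_eq[OF normal_moment_odd[OF s, of 0 k]] by simp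
  show "(\<integral>x. x ^ 0 \<partial>NN s) = 1"
    using prob_space.prob_space[OF prob_NN[OF s]] by simp
  show "(\<integral>x. x ^ 1 \<partial>NN s) = 0" using o[of 0] by (subst I) auto
  show "(\<integral>x. x ^ 3 \<partial>NN s) = 0" using o[of 1] by (subst I) (auto simp: numeral_eq_Suc)
  have c1: "fact (2 * 1) / ((2 / s\<^sup>2)^1 * fact 1) = s\<^sup>2" using s by (simp add: field_simps)
  have c2: "fact (2 * 2) / ((2 / s\<^sup>2)^2 * fact 2) = 3 * s ^ 4" using s
    by (simp add: field_simps numeral_eq_Suc fact_Suc power2_eq_square)
  show "(\<integral>x. x ^ 2 \<partial>NN s) = s\<^sup>2" using e[of 1] unfolding c1 by (subst I) auto
  show "(\<integral>x. x ^ 4 \<partial>NN s) = 3 * s ^ 4" using e[of 2] unfolding c2 by (subst I) auto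
qed



definition good :: "'a measure \<Rightarrow> ('a \<Rightarrow> complex) \<Rightarrow> real \<Rightarrow> bool" where
  "good P W v \<longleftrightarrow> W \<in> borel_measurable P \<and> integrable P (\<lambda>\<omega>. cmod (W \<omega>) ^ 4)
     \<and> (\<integral>\<omega>. W \<omega> \<partial>P) = 0 \<and> (\<integral>\<omega>. (W \<omega>)^2 \<partial>P) = 0
     \<and> (\<integral>\<omega>. cmod (W \<omega>) ^ 2 \<partial>P) = v \<and> (\<integral>\<omega>. cmod (W \<omega>) ^ 4 \<partial>P) = 2 * v\<^sup>2"

lemma integral_cplx:
  fixes f g :: "_ \<Rightarrow> real"
  assumes "integrable M f" "integrable M g"
  shows "(\<integral>x. complex_of_real (f x) + \<i> * complex_of_real (g x) \<partial>M) = of_real (integral\<^sup>L M f) + \<i> * of_real (integral\<^sup>L M g)"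
proof -
  have "(\<integral>x. complex_of_real (f x) + \<i> * complex_of_real (g x) \<partial>M) = (\<integral>x. complex_of_real (f x) \<partial>M) + (\<integral>x. \<i> * complex_of_real (g x) \<partial>M)"
    by (rule Bochner_Integration.integral_add) (use assms in auto)
  then show ?thesis by simp
qed

lemma QM:
  assumes s: "s > 0"
  shows "integrable (NN s \<Otimes>\<^sub>M NN s) (\<lambda>x. fst x ^ i * snd x ^ j)"
    and "(\<integral>x. fst x ^ i * snd x ^ j \<partial>(NN s \<Otimes>\<^sub>M NN s)) = (\<integral>x. x ^ i \<partial>NN s) * (\<integral>x. x ^ j \<partial>NN s)"
  using integrable_prod_mult[OF prob_space_imp_sigma_finite[OF prob_NN[OF s]] prob_space_imp_sigma_finite[OF prob_NN[OF s]]
      NN_mom(1)[OF s, of i] NN_mom(1)[OF s, of j]] by auto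

lemma cpl_measurable_NN[measurable]: "cpl \<in> borel_measurable (NN s \<Otimes>\<^sub>M NN s)"
  unfolding cpl_def[abs_def] Complex_eq by measurable

lemma gauss_good:
  assumes P: "prob_space P" and nu: "nu > 0" and D: "distributed P lborel Z (CN_density nu)"
  shows "good P Z nu"
proof -
  define s where "s = sqrt (nu / 2)"
  have s: "s > 0" using nu by (simp add: s_def)
  have s2: "s\<^sup>2 = nu / 2" using nu by (simp add: s_def)
  define Q where "Q = NN s \<Otimes>\<^sub>M NN s"
  have Zl: "Z \<in> measurable P lborel" and dd: "distr P lborel Z = distr Q borel cpl"
    using D CN_eq[OF nu] by (auto simp: distributed_def Q_def s_def)
  have Zm[measurable]: "Z \<in> borel_measurable P" using Zl by (simp add: measurable_lborel1)
  have cm[measurable]: "cpl \<in> borel_measurable Q" by (simp add: Q_def)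
  have TI: "integrable P (\<lambda>\<omega>. g (Z \<omega>)) \<longleftrightarrow> integrable Q (\<lambda>x. g (cpl x))"
    if [measurable]: "g \<in> borel_measurable borel" for g :: "complex \<Rightarrow> 'b::{banach, second_countable_topology}"
  proof -
    have "integrable P (\<lambda>\<omega>. g (Z \<omega>)) \<longleftrightarrow> integrable (distr P lborel Z) g"
      by (rule integrable_distr_eq[symmetric]) (auto simp: Zl)
    also have "\<dots> \<longleftrightarrow> integrable (distr Q borel cpl) g" by (simp add: dd)
    also have "\<dots> \<longleftrightarrow> integrable Q (\<lambda>x. g (cpl x))"
      by (rule integrable_distr_eq) auto
    finally show ?thesis .
  qed
  have TE: "(\<integral>\<omega>. g (Z \<omega>) \<partial>P) = (\<integral>x. g (cpl x) \<partial>Q)"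
    if [measurable]: "g \<in> borel_measurable borel" for g :: "complex \<Rightarrow> 'b::{banach, second_countable_topology}"
  proof -
    have "(\<integral>\<omega>. g (Z \<omega>) \<partial>P) = integral\<^sup>L (distr P lborel Z) g"
      by (rule integral_distr[symmetric]) (auto simp: Zl)
    also have "\<dots> = integral\<^sup>L (distr Q borel cpl) g" by (simp add: dd)
    also have "\<dots> = (\<integral>x. g (cpl x) \<partial>Q)"
      by (rule integral_distr) auto
    finally show ?thesis .
  qed
  note qi = QM(1)[OF s, folded Q_def] and qe = QM(2)[OF s, folded Q_def]
  note mm = NN_mom[OF s]
  have m: "\<And>x::real\<times>real. fst x = fst x ^ 1 * snd x ^ 0" "\<And>x::real\<times>real. snd x = fst x ^ 0 * snd x ^ 1"
    "\<And>x::real\<times>real. fst x ^ 2 = fst x ^ 2 * snd x ^ 0" "\<And>x::real\<times>real. snd x ^ 2 = fst x ^ 0 * snd x ^ 2"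
    "\<And>x::real\<times>real. fst x * snd x = fst x ^ 1 * snd x ^ 1"
    "\<And>x::real\<times>real. fst x ^ 4 = fst x ^ 4 * snd x ^ 0" "\<And>x::real\<times>real. snd x ^ 4 = fst x ^ 0 * snd x ^ 4"
    by auto
  have i1: "integrable Q (\<lambda>x. fst x)" "integrable Q (\<lambda>x. snd x)"
    "integrable Q (\<lambda>x. fst x ^ 2)" "integrable Q (\<lambda>x. snd x ^ 2)" "integrable Q (\<lambda>x. fst x * snd x)"
    "integrable Q (\<lambda>x. fst x ^ 4)" "integrable Q (\<lambda>x. snd x ^ 4)" "integrable Q (\<lambda>x. fst x ^ 2 * snd x ^ 2)"
    by (subst m, rule qi)+ (rule qi)
  have e1: "(\<integral>x. fst x \<partial>Q) = 0" "(\<integral>x. snd x \<partial>Q) = 0"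
    "(\<integral>x. fst x ^ 2 \<partial>Q) = s\<^sup>2" "(\<integral>x. snd x ^ 2 \<partial>Q) = s\<^sup>2" "(\<integral>x. fst x * snd x \<partial>Q) = 0"
    "(\<integral>x. fst x ^ 4 \<partial>Q) = 3 * s^4" "(\<integral>x. snd x ^ 4 \<partial>Q) = 3 * s^4"
    "(\<integral>x. fst x ^ 2 * snd x ^ 2 \<partial>Q) = s^4"
    using qe[of 1 0] qe[of 0 1] qe[of 2 0] qe[of 0 2] qe[of 1 1] qe[of 4 0] qe[of 0 4] qe[of 2 2]
    unfolding mm(2-6) by (simp_all add: power2_eq_square numeral_eq_Suc)
  have c1: "\<And>x. cpl x = of_real (fst x) + \<i> * of_real (snd x)"
    by (simp add: cpl_def Complex_eq)
  have c2: "\<And>x. (cpl x)^2 = of_real (fst x ^ 2 - snd x ^ 2) + \<i> * of_real (2 * (fst x * snd x))"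
    by (simp add: cpl_def Complex_eq power2_eq_square algebra_simps)
  have c3: "\<And>x. cmod (cpl x) ^ 2 = fst x ^ 2 + snd x ^ 2"
    by (simp add: cpl_def cmod_def)
  have c4: "\<And>x. cmod (cpl x) ^ 4 = fst x ^ 4 + 2 * (fst x ^ 2 * snd x ^ 2) + snd x ^ 4"
  proof -
    fix x
    have "cmod (cpl x) ^ 4 = (cmod (cpl x) ^ 2) ^ 2" by (simp flip: power_mult)
    then show "cmod (cpl x) ^ 4 = fst x ^ 4 + 2 * (fst x ^ 2 * snd x ^ 2) + snd x ^ 4"
      unfolding c3 by (simp add: power2_eq_square algebra_simps numeral_eq_Suc)
  qed
  show ?thesis unfolding good_def
  proof (intro conjI)
    show "Z \<in> borel_measurable P" by simp
    show "integrable P (\<lambda>\<omega>. cmod (Z \<omega>) ^ 4)"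
      by (subst TI) (auto simp: c4 i1)
    show "(\<integral>\<omega>. Z \<omega> \<partial>P) = 0"
    proof -
      have c1': "cpl = (\<lambda>x. of_real (fst x) + \<i> * of_real (snd x))" using c1 by auto
      show ?thesis by (subst TE[of "\<lambda>z. z"]) (auto simp: c1' i1 e1)
    qed
    show "(\<integral>\<omega>. (Z \<omega>)^2 \<partial>P) = 0"
      apply (subst TE[of "\<lambda>z. z^2"], simp)
      apply (simp only: c2)
      apply (subst integral_cplx)
      using i1 e1 by auto
    show "(\<integral>\<omega>. cmod (Z \<omega>) ^ 2 \<partial>P) = nu"
      by (subst TE[of "\<lambda>z. cmod z ^ 2"]) (auto simp: c3 i1 e1 s2)
    show "(\<integral>\<omega>. cmod (Z \<omega>) ^ 4 \<partial>P) = 2 * nu\<^sup>2"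
    proof -
      have "(\<integral>x. fst x ^ 4 + 2 * (fst x ^ 2 * snd x ^ 2) + snd x ^ 4 \<partial>Q) = 
         (\<integral>x. fst x ^ 4 \<partial>Q) + (\<integral>x. 2 * (fst x ^ 2 * snd x ^ 2) \<partial>Q) + (\<integral>x. snd x ^ 4 \<partial>Q)"
        using i1 by (simp add: integral_add)
      also have "\<dots> = 8 * s ^ 4" using e1 by simp
      also have "\<dots> = 8 * (s\<^sup>2)\<^sup>2" by (simp flip: power_mult)
      also have "\<dots> = 2 * nu\<^sup>2" unfolding s2 by (simp add: power2_eq_square)
      finally have *: "(\<integral>x. cmod (cpl x) ^ 4 \<partial>Q) = 2 * nu\<^sup>2" by (simp only: c4)
      have "(\<integral>\<omega>. cmod (Z \<omega>) ^ 4 \<partial>P) = (\<integral>x. cmod (cpl x) ^ 4 \<partial>Q)"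
        by (rule TE) measurable
      then show ?thesis using * by simp
    qed
  qed
qed



lemma pow_le14: "(t::real) \<ge> 0 \<Longrightarrow> n \<le> 4 \<Longrightarrow> t ^ n \<le> 1 + t ^ 4"
proof (cases "t \<le> 1")
  case True
  assume "t \<ge> 0" "n \<le> 4"
  then have "t ^ n \<le> 1" using True by (simp add: power_le_one)
  then show ?thesis by (smt (verit) \<open>t \<ge> 0\<close> zero_le_power)
next
  case False
  assume "t \<ge> 0" "n \<le> 4"
  then have "t ^ n \<le> t ^ 4" using False by (intro power_increasing) auto
  then show ?thesis by simp
qed

lemma int_bound4:
  fixes g :: "complex \<Rightarrow> 'b::{banach, second_countable_topology}"
  assumes P: "prob_space P" and [measurable]: "W \<in> borel_measurable P"
    and I4: "integrable P (\<lambda>\<omega>. cmod (W \<omega>) ^ 4)"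
    and [measurable]: "g \<in> borel_measurable borel"
    and b: "\<And>z. norm (g z) \<le> 1 + cmod z ^ 4"
  shows "integrable P (\<lambda>\<omega>. g (W \<omega>))"
proof (rule Bochner_Integration.integrable_bound)
  interpret prob_space P by fact
  show "integrable P (\<lambda>\<omega>. 1 + cmod (W \<omega>) ^ 4)" using I4 by simp
  show "(\<lambda>\<omega>. g (W \<omega>)) \<in> borel_measurable P" by measurable
  show "AE x in P. norm (g (W x)) \<le> norm (1 + cmod (W x) ^ 4)"
    using b by (auto intro: order_trans)
qed

lemma cnorm_sq: "complex_of_real (cmod z ^ 2) = z * cnj z"
  by (metis complex_norm_square of_real_power)

lemma cnorm_4: "complex_of_real (cmod z ^ 4) = (z * cnj z)^2"
proof -
  have "cmod z ^ 4 = (cmod z ^ 2)^2" by (simp flip: power_mult)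
  then show ?thesis by (simp add: cnorm_sq[symmetric])
qed

lemma good_int:
  fixes f :: "complex \<Rightarrow> 'b::{banach, second_countable_topology}"
  assumes P: "prob_space P" and g: "good P W v"
    and [measurable]: "f \<in> borel_measurable borel" and b: "\<And>z. norm (f z) \<le> 1 + cmod z ^ 4"
  shows "integrable P (\<lambda>\<omega>. f (W \<omega>))"
  using g unfolding good_def by (intro int_bound4[OF P, of W f]) (auto simp: b)

lemma cb: "cmod z \<le> 1 + cmod z ^ 4" "cmod z ^ 2 \<le> 1 + cmod z ^ 4" "cmod z ^ 3 \<le> 1 + cmod z ^ 4" 
  "cmod z ^ 4 \<le> 1 + cmod z ^ 4" "1 \<le> 1 + cmod z ^ 4"
  using pow_le14[of "cmod z" 1] pow_le14[of "cmod z" 2] pow_le14[of "cmod z" 3] by auto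



lemma good_facts:
  assumes P: "prob_space P" and g: "good P S v"
  shows "(\<integral>\<omega>. S \<omega> \<partial>P) = 0" "(\<integral>\<omega>. cnj (S \<omega>) \<partial>P) = 0"
    "(\<integral>\<omega>. (S \<omega>)^2 \<partial>P) = 0" "(\<integral>\<omega>. (cnj (S \<omega>))^2 \<partial>P) = 0"
    "(\<integral>\<omega>. S \<omega> * cnj (S \<omega>) \<partial>P) = of_real v"
    "(\<integral>\<omega>. (S \<omega> * cnj (S \<omega>))^2 \<partial>P) = of_real (2 * v\<^sup>2)"
    "(\<integral>\<omega>. (1::complex) \<partial>P) = 1"
proof -
  interpret prob_space P by fact
  show "(\<integral>\<omega>. S \<omega> \<partial>P) = 0" using g by (simp add: good_def)
  then show "(\<integral>\<omega>. cnj (S \<omega>) \<partial>P) = 0" by simp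
  show "(\<integral>\<omega>. (S \<omega>)^2 \<partial>P) = 0" using g by (simp add: good_def)
  then show "(\<integral>\<omega>. (cnj (S \<omega>))^2 \<partial>P) = 0" by (simp flip: complex_cnj_power)
  have "(\<integral>\<omega>. S \<omega> * cnj (S \<omega>) \<partial>P) = (\<integral>\<omega>. complex_of_real (cmod (S \<omega>) ^ 2) \<partial>P)"
    by (simp only: cnorm_sq)
  also have "\<dots> = of_real v" using g by (simp only: integral_complex_of_real good_def)
  finally show "(\<integral>\<omega>. S \<omega> * cnj (S \<omega>) \<partial>P) = of_real v" .
  have "(\<integral>\<omega>. (S \<omega> * cnj (S \<omega>))^2 \<partial>P) = (\<integral>\<omega>. complex_of_real (cmod (S \<omega>) ^ 4) \<partial>P)"
    by (simp only: cnorm_4)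
  also have "\<dots> = of_real (2 * v\<^sup>2)" using g by (simp only: integral_complex_of_real good_def)
  finally show "(\<integral>\<omega>. (S \<omega> * cnj (S \<omega>))^2 \<partial>P) = of_real (2 * v\<^sup>2)" .
  show "(\<integral>\<omega>. (1::complex) \<partial>P) = 1" by (simp add: prob_space)
qed

lemma hb_of_real:
  assumes "has_bochner_integral M (\<lambda>x. complex_of_real (f x)) (of_real r)"
  shows "integrable M f" "integral\<^sup>L M f = r"
proof -
  have i: "integrable M (\<lambda>x. complex_of_real (f x))" using integrable.intros[OF assms] .
  then show "integrable M f" by (simp add: complex_of_real_integrable_eq)
  have "complex_of_real (integral\<^sup>L M f) = of_real r"
    using has_bochner_integral_integral_eq[OF assms] by simp
  then show "integral\<^sup>L M f = r" by simp
qed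

lemma id4: "complex_of_real (cmod (s + w) ^ 4) =
   (s * cnj s)^2 * 1 + 1 * (w * cnj w)^2 + 4 * ((s * cnj s) * (w * cnj w)) + s^2 * (cnj w)^2 + (cnj s)^2 * w^2
   + 2 * ((s^2 * cnj s) * cnj w) + 2 * ((s * (cnj s)^2) * w) + 2 * (s * (w * (cnj w)^2)) + 2 * (cnj s * (w^2 * cnj w))"
  unfolding cnorm_4 complex_cnj_add by algebra

lemma id2: "complex_of_real (cmod (s + w) ^ 2) = (s * cnj s) * 1 + 1 * (w * cnj w) + s * cnj w + cnj s * w"
  unfolding cnorm_sq complex_cnj_add by algebra

lemma good_add:
  assumes P: "prob_space P" and gS: "good P S v" and gW: "good P W w"
    and ind: "prob_space.indep_var P borel S borel W"
  shows "good P (\<lambda>\<omega>. S \<omega> + W \<omega>) (v + w)"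
proof -
  interpret prob_space P by fact
  have Sm[measurable]: "S \<in> borel_measurable P" and Wm[measurable]: "W \<in> borel_measurable P"
    using gS gW by (auto simp: good_def)
  have HP: "has_bochner_integral P (\<lambda>\<omega>. f (S \<omega>) * g (W \<omega>)) ((\<integral>\<omega>. f (S \<omega>) \<partial>P) * (\<integral>\<omega>. g (W \<omega>) \<partial>P))"
    if [measurable]: "f \<in> borel_measurable borel" "g \<in> borel_measurable borel"
      and bf: "\<And>z. norm (f z) \<le> 1 + cmod z ^ 4" and bg: "\<And>z. norm (g z) \<le> 1 + cmod z ^ 4"
    for f g :: "complex \<Rightarrow> complex"
  proof -
    have "indep_var borel (f \<circ> S) borel (g \<circ> W)" by (rule indep_var_compose[OF ind]) auto
    then have i: "indep_var borel (\<lambda>\<omega>. f (S \<omega>)) borel (\<lambda>\<omega>. g (W \<omega>))" by (simp add: comp_def)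
    have fi: "integrable P (\<lambda>\<omega>. f (S \<omega>))" by (rule good_int[OF P gS]) (auto simp: bf)
    have gi: "integrable P (\<lambda>\<omega>. g (W \<omega>))" by (rule good_int[OF P gW]) (auto simp: bg)
    show ?thesis using indep_var_integrable[OF i fi gi] indep_var_lebesgue_integral[OF i fi gi]
      by (simp add: has_bochner_integral_iff)
  qed
  note fS = good_facts[OF P gS] and fW = good_facts[OF P gW]
  have nb: "\<And>z::complex. norm (z * cnj z) = cmod z ^ 2" "\<And>z::complex. norm ((z * cnj z)^2) = cmod z ^ 4"
    "\<And>z::complex. norm (z^2 * cnj z) = cmod z ^ 3" "\<And>z::complex. norm (z * (cnj z)^2) = cmod z ^ 3"
    "\<And>z::complex. norm (z^2) = cmod z ^ 2" "\<And>z::complex. norm ((cnj z)^2) = cmod z ^ 2"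
    by (simp_all add: norm_mult norm_power power2_eq_square numeral_eq_Suc)
  note bnd = cb nb
  have ms: "(\<lambda>z::complex. (z * cnj z)^2) \<in> borel_measurable borel" "(\<lambda>z::complex. 1::complex) \<in> borel_measurable borel"
    "(\<lambda>z::complex. z * cnj z) \<in> borel_measurable borel" "(\<lambda>z::complex. z^2) \<in> borel_measurable borel"
    "(\<lambda>z::complex. (cnj z)^2) \<in> borel_measurable borel" "(\<lambda>z::complex. z^2 * cnj z) \<in> borel_measurable borel"
    "(\<lambda>z::complex. z * (cnj z)^2) \<in> borel_measurable borel" "(\<lambda>z::complex. z) \<in> borel_measurable borel"
    "(\<lambda>z::complex. cnj z) \<in> borel_measurable borel"
    by (auto intro!: borel_measurable_continuous_onI continuous_intros)
  note HPs = HP[OF ms(1) ms(2)] HP[OF ms(2) ms(1)] HP[OF ms(3) ms(3)] HP[OF ms(4) ms(5)] HP[OF ms(5) ms(4)]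
    HP[OF ms(6) ms(9)] HP[OF ms(7) ms(8)] HP[OF ms(8) ms(7)] HP[OF ms(9) ms(6)]
    HP[OF ms(3) ms(2)] HP[OF ms(2) ms(3)] HP[OF ms(8) ms(9)] HP[OF ms(9) ms(8)]
    HP[OF ms(4) ms(2)] HP[OF ms(2) ms(4)] HP[OF ms(8) ms(8)] HP[OF ms(8) ms(2)] HP[OF ms(2) ms(8)]
  have t: "has_bochner_integral P (\<lambda>\<omega>. (S \<omega> * cnj (S \<omega>))^2 * 1) (of_real (2 * v\<^sup>2))"
    "has_bochner_integral P (\<lambda>\<omega>. 1 * (W \<omega> * cnj (W \<omega>))^2) (of_real (2 * w\<^sup>2))"
    "has_bochner_integral P (\<lambda>\<omega>. (S \<omega> * cnj (S \<omega>)) * (W \<omega> * cnj (W \<omega>))) (of_real v * of_real w)"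
    "has_bochner_integral P (\<lambda>\<omega>. (S \<omega>)^2 * (cnj (W \<omega>))^2) 0"
    "has_bochner_integral P (\<lambda>\<omega>. (cnj (S \<omega>))^2 * (W \<omega>)^2) 0"
    "has_bochner_integral P (\<lambda>\<omega>. ((S \<omega>)^2 * cnj (S \<omega>)) * cnj (W \<omega>)) 0"
    "has_bochner_integral P (\<lambda>\<omega>. (S \<omega> * (cnj (S \<omega>))^2) * W \<omega>) 0"
    "has_bochner_integral P (\<lambda>\<omega>. S \<omega> * (W \<omega> * (cnj (W \<omega>))^2)) 0"
    "has_bochner_integral P (\<lambda>\<omega>. cnj (S \<omega>) * ((W \<omega>)^2 * cnj (W \<omega>))) 0"
    "has_bochner_integral P (\<lambda>\<omega>. (S \<omega> * cnj (S \<omega>)) * 1) (of_real v)"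
    "has_bochner_integral P (\<lambda>\<omega>. 1 * (W \<omega> * cnj (W \<omega>))) (of_real w)"
    "has_bochner_integral P (\<lambda>\<omega>. S \<omega> * cnj (W \<omega>)) 0"
    "has_bochner_integral P (\<lambda>\<omega>. cnj (S \<omega>) * W \<omega>) 0"
    "has_bochner_integral P (\<lambda>\<omega>. (S \<omega>)^2 * 1) 0"
    "has_bochner_integral P (\<lambda>\<omega>. 1 * (W \<omega>)^2) 0"
    "has_bochner_integral P (\<lambda>\<omega>. S \<omega> * W \<omega>) 0"
    "has_bochner_integral P (\<lambda>\<omega>. S \<omega> * 1) 0"
    "has_bochner_integral P (\<lambda>\<omega>. 1 * W \<omega>) 0"
    using HPs by (simp_all add: fS fW bnd prob_space)
  have h4: "has_bochner_integral P (\<lambda>\<omega>. complex_of_real (cmod (S \<omega> + W \<omega>) ^ 4)) (of_real (2 * (v + w)\<^sup>2))"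
  proof -
    have "has_bochner_integral P (\<lambda>\<omega>. (S \<omega> * cnj (S \<omega>))^2 * 1 + 1 * (W \<omega> * cnj (W \<omega>))^2
       + 4 * ((S \<omega> * cnj (S \<omega>)) * (W \<omega> * cnj (W \<omega>))) + (S \<omega>)^2 * (cnj (W \<omega>))^2
       + (cnj (S \<omega>))^2 * (W \<omega>)^2 + 2 * (((S \<omega>)^2 * cnj (S \<omega>)) * cnj (W \<omega>))
       + 2 * ((S \<omega> * (cnj (S \<omega>))^2) * W \<omega>) + 2 * (S \<omega> * (W \<omega> * (cnj (W \<omega>))^2))
       + 2 * (cnj (S \<omega>) * ((W \<omega>)^2 * cnj (W \<omega>))))
       (of_real (2 * v\<^sup>2) + of_real (2 * w\<^sup>2) + 4 * (of_real v * of_real w) + 0 + 0 + 2 * 0 + 2 * 0 + 2 * 0 + 2 * 0)"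
      by (intro has_bochner_integral_add has_bochner_integral_mult_right t)
    moreover have "of_real (2 * v\<^sup>2) + of_real (2 * w\<^sup>2) + 4 * (of_real v * of_real w) + 0 + 0 + 2 * 0 + 2 * 0 + 2 * 0 + 2 * (0::complex)
       = of_real (2 * (v + w)\<^sup>2)" by (simp add: power2_eq_square algebra_simps)
    ultimately show ?thesis by (simp only: id4)
  qed
  have h2: "has_bochner_integral P (\<lambda>\<omega>. complex_of_real (cmod (S \<omega> + W \<omega>) ^ 2)) (of_real (v + w))"
  proof -
    have "has_bochner_integral P (\<lambda>\<omega>. (S \<omega> * cnj (S \<omega>)) * 1 + 1 * (W \<omega> * cnj (W \<omega>))
       + S \<omega> * cnj (W \<omega>) + cnj (S \<omega>) * W \<omega>) (of_real v + of_real w + 0 + 0)"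
      by (intro has_bochner_integral_add t)
    then show ?thesis by (simp only: id2) simp
  qed
  have hsq: "has_bochner_integral P (\<lambda>\<omega>. (S \<omega> + W \<omega>)^2) 0"
  proof -
    have "has_bochner_integral P (\<lambda>\<omega>. (S \<omega>)^2 * 1 + 2 * (S \<omega> * W \<omega>) + 1 * (W \<omega>)^2) (0 + 2 * 0 + 0)"
      by (intro has_bochner_integral_add has_bochner_integral_mult_right t)
    moreover have "\<And>s w::complex. (s + w)^2 = s^2 * 1 + 2 * (s * w) + 1 * w^2" by algebra
    ultimately show ?thesis by simp
  qed
  have h1: "has_bochner_integral P (\<lambda>\<omega>. S \<omega> + W \<omega>) 0"
  proof -
    have "has_bochner_integral P (\<lambda>\<omega>. S \<omega> * 1 + 1 * W \<omega>) (0 + 0)"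
      by (intro has_bochner_integral_add t)
    then show ?thesis by simp
  qed
  show ?thesis unfolding good_def
    using hb_of_real[OF h4] hb_of_real[OF h2] has_bochner_integral_integral_eq[OF hsq]
      has_bochner_integral_integral_eq[OF h1]
    by auto
qed



lemma indep_groups:
  assumes P: "prob_space P" and ind: "prob_space.indep_vars P (\<lambda>_. borel) X I"
    and AB: "A \<inter> B = {}" "A \<subseteq> I" "B \<subseteq> I"
    and f: "f \<in> borel_measurable (PiM A (\<lambda>_. borel))" and g: "g \<in> borel_measurable (PiM B (\<lambda>_. borel))"
  shows "prob_space.indep_var P borel (\<lambda>\<omega>. f (restrict (\<lambda>i. X i \<omega>) A)) borel (\<lambda>\<omega>. g (restrict (\<lambda>i. X i \<omega>) B))"
proof -
  interpret prob_space P by fact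
  have "indep_var borel (f \<circ> (\<lambda>\<omega>. restrict (\<lambda>i. X i \<omega>) A)) borel (g \<circ> (\<lambda>\<omega>. restrict (\<lambda>i. X i \<omega>) B))"
    by (rule indep_var_compose[OF indep_var_restrict[OF ind AB] f g])
  then show ?thesis by (simp add: comp_def)
qed

lemma good_scale:
  assumes P: "prob_space P" and g: "good P H v"
    and em[measurable]: "E \<in> borel_measurable P" and e1: "\<And>\<omega>. cmod (E \<omega>) = 1"
    and ind: "prob_space.indep_var P borel H borel E"
  shows "good P (\<lambda>\<omega>. H \<omega> * (complex_of_real c * E \<omega>)) (c\<^sup>2 * v)"
proof -
  interpret prob_space P by fact
  have Hm[measurable]: "H \<in> borel_measurable P" using g by (simp add: good_def)
  have pw: "\<And>f. f \<in> borel_measurable borel \<Longrightarrow> (\<And>z. norm (f z) \<le> 1 + cmod z ^ 4) \<Longrightarrow> 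
     (\<integral>\<omega>. f (H \<omega>) * (E \<omega>)^k \<partial>P) = (\<integral>\<omega>. f (H \<omega>) \<partial>P) * (\<integral>\<omega>. (E \<omega>)^k \<partial>P)" for k
  proof -
    fix f :: "complex \<Rightarrow> complex" assume [measurable]: "f \<in> borel_measurable borel" and bf: "\<And>z. norm (f z) \<le> 1 + cmod z ^ 4"
    have "indep_var borel (f \<circ> H) borel ((\<lambda>z. z ^ k) \<circ> E)" by (rule indep_var_compose[OF ind]) auto
    then have i: "indep_var borel (\<lambda>\<omega>. f (H \<omega>)) borel (\<lambda>\<omega>. (E \<omega>)^k)" by (simp add: comp_def)
    have fi: "integrable P (\<lambda>\<omega>. f (H \<omega>))" by (rule good_int[OF P g]) (auto simp: bf)
    have ei: "integrable P (\<lambda>\<omega>. (E \<omega>)^k)"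
      by (rule integrable_const_bound[where B=1]) (auto simp: norm_power e1)
    show "(\<integral>\<omega>. f (H \<omega>) * (E \<omega>)^k \<partial>P) = (\<integral>\<omega>. f (H \<omega>) \<partial>P) * (\<integral>\<omega>. (E \<omega>)^k \<partial>P)"
      by (rule indep_var_lebesgue_integral[OF i fi ei])
  qed
  have n: "\<And>\<omega>. cmod (H \<omega> * (complex_of_real c * E \<omega>)) = \<bar>c\<bar> * cmod (H \<omega>)"
    by (simp add: norm_mult e1)
  have n2: "\<And>\<omega>. cmod (H \<omega> * (complex_of_real c * E \<omega>)) ^ 2 = c\<^sup>2 * cmod (H \<omega>) ^ 2"
    by (simp add: n power_mult_distrib)
  have n4: "\<And>\<omega>. cmod (H \<omega> * (complex_of_real c * E \<omega>)) ^ 4 = c ^ 4 * cmod (H \<omega>) ^ 4"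
    by (simp add: n power_mult_distrib pow_le14)
  have c4: "c ^ 4 = (c\<^sup>2)\<^sup>2" by (simp flip: power_mult)
  have "(\<lambda>\<omega>. H \<omega> * (complex_of_real c * E \<omega>)) = (\<lambda>\<omega>. of_real c * (H \<omega> * (E \<omega>)^1))"
    by (auto simp: fun_eq_iff ac_simps)
  then have "(\<integral>\<omega>. H \<omega> * (complex_of_real c * E \<omega>) \<partial>P) = of_real c * (\<integral>\<omega>. H \<omega> * (E \<omega>)^1 \<partial>P)"
    by (simp only: integral_mult_right_zero)
  also have "\<dots> = 0" using pw[of "\<lambda>z. z" 1] g by (simp add: good_def cb borel_measurable_continuous_onI)
  finally have E1: "(\<integral>\<omega>. H \<omega> * (complex_of_real c * E \<omega>) \<partial>P) = 0" .
  have "(\<lambda>\<omega>. (H \<omega> * (complex_of_real c * E \<omega>))^2) = (\<lambda>\<omega>. of_real c ^ 2 * ((H \<omega>)^2 * (E \<omega>)^2))"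
    by (auto simp: fun_eq_iff power_mult_distrib ac_simps)
  then have "(\<integral>\<omega>. (H \<omega> * (complex_of_real c * E \<omega>))^2 \<partial>P) = of_real c ^ 2 * (\<integral>\<omega>. (H \<omega>)^2 * (E \<omega>)^2 \<partial>P)"
    by (simp only: integral_mult_right_zero)
  also have "\<dots> = 0" using pw[of "\<lambda>z. z^2" 2] g by (simp add: good_def cb norm_power)
  finally have E2: "(\<integral>\<omega>. (H \<omega> * (complex_of_real c * E \<omega>))^2 \<partial>P) = 0" .
  show ?thesis using g E1 E2 unfolding good_def n2 n4 c4
    by (simp add: power_mult_distrib power2_eq_square)
qed



definition pm :: "bool \<Rightarrow> real \<Rightarrow> real" where "pm b x = (if b then upos x else uneg x)"

definition cc :: "real \<Rightarrow> (nat \<Rightarrow> real) \<Rightarrow> (nat \<Rightarrow> real) \<Rightarrow> (nat \<Rightarrow> real) \<Rightarrow> nat \<Rightarrow> bool \<Rightarrow> nat \<Rightarrow> real" where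
  "cc \<eta> c u \<mu> m b k = sqrt (\<eta> * c m * pm b (u k)) / \<mu> k"

definition Grp :: "nat \<Rightarrow> bool \<Rightarrow> nat set \<Rightarrow> src set" where
  "Grp m b F = (\<lambda>k. SrcH k m b) ` F \<union> (\<lambda>k. SrcPhi k m b) ` F \<union> {SrcZ m b}"

definition wfun :: "real \<Rightarrow> (nat \<Rightarrow> real) \<Rightarrow> (nat \<Rightarrow> real) \<Rightarrow> (nat \<Rightarrow> real) \<Rightarrow> nat \<Rightarrow> bool \<Rightarrow> nat \<Rightarrow> (src \<Rightarrow> complex) \<Rightarrow> complex" where
  "wfun \<eta> c u \<mu> m b k x = x (SrcH k m b) * (complex_of_real (cc \<eta> c u \<mu> m b k) * exp (\<i> * complex_of_real (Re (x (SrcPhi k m b)))))"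

definition yfun :: "real \<Rightarrow> (nat \<Rightarrow> real) \<Rightarrow> (nat \<Rightarrow> real) \<Rightarrow> (nat \<Rightarrow> real) \<Rightarrow> nat \<Rightarrow> bool \<Rightarrow> nat set \<Rightarrow> (src \<Rightarrow> complex) \<Rightarrow> complex" where
  "yfun \<eta> c u \<mu> m b F x = (\<Sum>k\<in>F. wfun \<eta> c u \<mu> m b k x) + x (SrcZ m b)"

lemma wfun_eq:
  assumes "{SrcH k m b, SrcPhi k m b} \<subseteq> A"
  shows "wfun \<eta> c u \<mu> m b k (restrict (\<lambda>i. src_family h z phi i \<omega>) A) = h k m b \<omega> * coef \<eta> c u \<mu> phi k m b \<omega>"
  using assms by (simp add: wfun_def coef_def src_family_def cc_def pm_def)

lemma yfun_eq:
  "yfun \<eta> c u \<mu> m b F (restrict (\<lambda>i. src_family h z phi i \<omega>) (Grp m b F)) =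
     (\<Sum>k\<in>F. h k m b \<omega> * coef \<eta> c u \<mu> phi k m b \<omega>) + z m b \<omega>"
  unfolding yfun_def
  by (rule arg_cong2[where f="(+)"], rule sum.cong, simp, rule wfun_eq) (auto simp: Grp_def src_family_def)

lemma wfun_meas:
  assumes "{SrcH k m b, SrcPhi k m b} \<subseteq> A"
  shows "wfun \<eta> c u \<mu> m b k \<in> borel_measurable (PiM A (\<lambda>_. borel))"
proof -
  have [measurable]: "(\<lambda>x. x (SrcH k m b)) \<in> borel_measurable (PiM A (\<lambda>_. borel))"
      "(\<lambda>x. x (SrcPhi k m b)) \<in> borel_measurable (PiM A (\<lambda>_. borel))"
    using assms by (auto intro!: measurable_component_singleton)
  show ?thesis unfolding wfun_def by measurable
qed

lemma yfun_meas: "yfun \<eta> c u \<mu> m b F \<in> borel_measurable (PiM (Grp m b F) (\<lambda>_. borel))"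
proof -
  have [measurable]: "(\<lambda>x. x (SrcZ m b)) \<in> borel_measurable (PiM (Grp m b F) (\<lambda>_. borel))"
    by (auto intro!: measurable_component_singleton simp: Grp_def)
  have [measurable]: "k \<in> F \<Longrightarrow> wfun \<eta> c u \<mu> m b k \<in> borel_measurable (PiM (Grp m b F) (\<lambda>_. borel))" for k
    by (rule wfun_meas) (auto simp: Grp_def)
  show ?thesis unfolding yfun_def[abs_def] by measurable
qed



lemma rx_good:
  assumes P: "prob_space P" and m: "m \<in> {1..M}"
    and eta: "\<eta> > 0" and sig: "\<sigma>z2 > 0"
    and mu: "\<forall>k\<in>{1..K}. \<mu> k > 0" and cm: "c m \<ge> 0"
    and dh: "\<forall>k\<in>{1..K}. \<forall>m\<in>{1..M}. \<forall>b. distributed P lborel (h k m b) (CN_density ((\<mu> k)\<^sup>2))"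
    and dz: "\<forall>m\<in>{1..M}. \<forall>b. distributed P lborel (z m b) (CN_density \<sigma>z2)"
    and dphi: "\<forall>k\<in>{1..K}. \<forall>m\<in>{1..M}. \<forall>b. distributed P lborel (phi k m b) unif_phase_density"
    and ind: "prob_space.indep_vars P (\<lambda>_. borel) (src_family h z phi) (src_index K M)"
  shows "good P (rx K \<eta> c u \<mu> h z phi m b) ((\<Sum>k\<in>{1..K}. \<eta> * c m * pm b (u k)) + \<sigma>z2)"
proof -
  interpret prob_space P by fact
  let ?X = "src_family h z phi"
  let ?I = "src_index K M"
  have grp_sub: "Grp m b F \<subseteq> ?I" if "F \<subseteq> {1..K}" for F
    using that m by (auto simp: Grp_def src_index_def)
  have W_good: "good P (\<lambda>\<omega>. h k m b \<omega> * coef \<eta> c u \<mu> phi k m b \<omega>) (\<eta> * c m * pm b (u k))"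
    if k: "k \<in> {1..K}" for k
  proof -
    have mk: "\<mu> k > 0" using mu k by auto
    have gh: "good P (h k m b) ((\<mu> k)\<^sup>2)"
      by (rule gauss_good[OF P]) (use dh k m mk in auto)
    have phim[measurable]: "phi k m b \<in> borel_measurable P"
      using dphi k m by (auto simp: distributed_def measurable_lborel1)
    have Em: "(\<lambda>\<omega>. exp (\<i> * complex_of_real (phi k m b \<omega>))) \<in> borel_measurable P" by measurable
    have i: "indep_var borel (\<lambda>\<omega>. (\<lambda>x. x (SrcH k m b)) (restrict (\<lambda>i. ?X i \<omega>) {SrcH k m b}))
       borel (\<lambda>\<omega>. (\<lambda>x. exp (\<i> * complex_of_real (Re (x (SrcPhi k m b))))) (restrict (\<lambda>i. ?X i \<omega>) {SrcPhi k m b}))"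
      by (rule indep_groups[OF P ind]) (use k m in \<open>auto simp: src_index_def intro!: measurable_component_singleton\<close>)
    have i2: "indep_var borel (h k m b) borel (\<lambda>\<omega>. exp (\<i> * complex_of_real (phi k m b \<omega>)))"
      using i by (simp add: src_family_def)
    have "good P (\<lambda>\<omega>. h k m b \<omega> * (complex_of_real (cc \<eta> c u \<mu> m b k) * exp (\<i> * complex_of_real (phi k m b \<omega>))))
       ((cc \<eta> c u \<mu> m b k)\<^sup>2 * (\<mu> k)\<^sup>2)"
      by (rule good_scale[OF P gh Em _ i2]) (simp add: norm_exp_i_times)
    moreover have "(cc \<eta> c u \<mu> m b k)\<^sup>2 * (\<mu> k)\<^sup>2 = \<eta> * c m * pm b (u k)"
    proof -
      have "\<eta> * c m * pm b (u k) \<ge> 0" using eta cm by (auto simp: pm_def upos_def uneg_def)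
      then show ?thesis using mk by (simp add: cc_def power_divide)
    qed
    ultimately show ?thesis by (simp add: coef_def cc_def pm_def)
  qed
  have main: "good P (\<lambda>\<omega>. (\<Sum>k\<in>F. h k m b \<omega> * coef \<eta> c u \<mu> phi k m b \<omega>) + z m b \<omega>)
      ((\<Sum>k\<in>F. \<eta> * c m * pm b (u k)) + \<sigma>z2)" if "F \<subseteq> {1..K}" for F
  proof -
    have "finite F" using that finite_subset by blast
    then show ?thesis using that
    proof (induction F rule: finite_induct)
      case empty
      have "good P (z m b) \<sigma>z2" by (rule gauss_good[OF P sig]) (use dz m in auto)
      then show ?case by simp
    next
      case (insert k F)
      have k: "k \<in> {1..K}" and F: "F \<subseteq> {1..K}" using insert.prems by auto
      have IH: "good P (\<lambda>\<omega>. (\<Sum>k\<in>F. h k m b \<omega> * coef \<eta> c u \<mu> phi k m b \<omega>) + z m b \<omega>)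
          ((\<Sum>k\<in>F. \<eta> * c m * pm b (u k)) + \<sigma>z2)" using insert.IH F by simp
      have i: "indep_var borel (\<lambda>\<omega>. yfun \<eta> c u \<mu> m b F (restrict (\<lambda>i. ?X i \<omega>) (Grp m b F)))
         borel (\<lambda>\<omega>. wfun \<eta> c u \<mu> m b k (restrict (\<lambda>i. ?X i \<omega>) {SrcH k m b, SrcPhi k m b}))"
        by (rule indep_groups[OF P ind _ grp_sub[OF F] _ yfun_meas wfun_meas])
          (use insert.hyps k m in \<open>auto simp: Grp_def src_index_def\<close>)
      have i2: "indep_var borel (\<lambda>\<omega>. (\<Sum>k\<in>F. h k m b \<omega> * coef \<eta> c u \<mu> phi k m b \<omega>) + z m b \<omega>)
          borel (\<lambda>\<omega>. h k m b \<omega> * coef \<eta> c u \<mu> phi k m b \<omega>)"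
        using i by (simp only: yfun_eq wfun_eq[OF subset_refl])
      have "good P (\<lambda>\<omega>. ((\<Sum>k\<in>F. h k m b \<omega> * coef \<eta> c u \<mu> phi k m b \<omega>) + z m b \<omega>) + h k m b \<omega> * coef \<eta> c u \<mu> phi k m b \<omega>)
          (((\<Sum>k\<in>F. \<eta> * c m * pm b (u k)) + \<sigma>z2) + \<eta> * c m * pm b (u k))"
        by (rule good_add[OF P IH W_good[OF k] i2])
      then show ?case using insert.hyps by (simp add: ac_simps)
    qed
  qed
  show ?thesis using main[OF subset_refl] by (simp add: rx_def[abs_def])
qed



lemma var_sum:
  fixes e :: "'j \<Rightarrow> 'a \<Rightarrow> real"
  assumes P: "prob_space P" and J: "finite J"
    and em: "\<And>j. j \<in> J \<Longrightarrow> e j \<in> borel_measurable P"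
    and ei: "\<And>j. j \<in> J \<Longrightarrow> integrable P (e j)"
    and e2: "\<And>j. j \<in> J \<Longrightarrow> integrable P (\<lambda>\<omega>. (e j \<omega>)^2)"
    and e0: "\<And>j. j \<in> J \<Longrightarrow> (\<integral>\<omega>. e j \<omega> \<partial>P) = 0"
    and ind: "\<And>i j. i \<in> J \<Longrightarrow> j \<in> J \<Longrightarrow> i \<noteq> j \<Longrightarrow> prob_space.indep_var P borel (e i) borel (e j)"
  shows "(\<integral>\<omega>. (\<Sum>j\<in>J. e j \<omega>)^2 \<partial>P) = (\<Sum>j\<in>J. \<integral>\<omega>. (e j \<omega>)^2 \<partial>P)"
proof -
  interpret prob_space P by fact
  have pi: "integrable P (\<lambda>\<omega>. e i \<omega> * e j \<omega>)" if "i \<in> J" "j \<in> J" for i j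
  proof (cases "i = j")
    case True then show ?thesis using e2[OF that(1)] by (simp add: power2_eq_square)
  next
    case False then show ?thesis using indep_var_integrable[OF ind[OF that False] ei ei] that by auto
  qed
  have pe: "(\<integral>\<omega>. e i \<omega> * e j \<omega> \<partial>P) = (if i = j then (\<integral>\<omega>. (e j \<omega>)^2 \<partial>P) else 0)" if "i \<in> J" "j \<in> J" for i j
  proof (cases "i = j")
    case True then show ?thesis by (simp add: power2_eq_square)
  next
    case False then show ?thesis using indep_var_lebesgue_integral[OF ind[OF that False] ei ei] that e0 by auto
  qed
  have "(\<lambda>\<omega>. (\<Sum>j\<in>J. e j \<omega>)^2) = (\<lambda>\<omega>. \<Sum>i\<in>J. \<Sum>j\<in>J. e i \<omega> * e j \<omega>)"
    by (simp add: power2_eq_square sum_product)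
  then have "(\<integral>\<omega>. (\<Sum>j\<in>J. e j \<omega>)^2 \<partial>P) = (\<Sum>i\<in>J. \<Sum>j\<in>J. \<integral>\<omega>. e i \<omega> * e j \<omega> \<partial>P)"
    using pi by (simp add: Bochner_Integration.integral_sum)
  also have "\<dots> = (\<Sum>i\<in>J. \<Sum>j\<in>J. (if i = j then (\<integral>\<omega>. (e j \<omega>)^2 \<partial>P) else 0))"
    by (intro sum.cong refl) (simp add: pe)
  also have "\<dots> = (\<Sum>j\<in>J. \<integral>\<omega>. (e j \<omega>)^2 \<partial>P)"
    using J by (simp add: sum.delta)
  finally show ?thesis .
qed



theorem proposition2:
  fixes P :: "'a measure"
    and K M :: nat
    and u \<mu> c :: "nat \<Rightarrow> real"
    and \<eta> \<sigma>z2 :: real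
    and h :: "nat \<Rightarrow> nat \<Rightarrow> bool \<Rightarrow> 'a \<Rightarrow> complex"
    and z :: "nat \<Rightarrow> bool \<Rightarrow> 'a \<Rightarrow> complex"
    and phi :: "nat \<Rightarrow> nat \<Rightarrow> bool \<Rightarrow> 'a \<Rightarrow> real"
  assumes "prob_space P"
    and "K \<ge> 1" and "M \<ge> 1"
    and "\<eta> > 0" and "\<sigma>z2 > 0"
    and "\<forall>k\<in>{1..K}. \<mu> k > 0"
    and "\<forall>m\<in>{1..M}. c m \<ge> 0"
    and "(\<Sum>m\<in>{1..M}. c m) > 0"
    and "\<forall>k\<in>{1..K}. \<forall>m\<in>{1..M}. \<forall>b.
           distributed P lborel (h k m b) (CN_density ((\<mu> k)\<^sup>2))"
    and "\<forall>m\<in>{1..M}. \<forall>b. distributed P lborel (z m b) (CN_density \<sigma>z2)"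
    and "\<forall>k\<in>{1..K}. \<forall>m\<in>{1..M}. \<forall>b.
           distributed P lborel (phi k m b) unif_phase_density"
    and "prob_space.indep_vars P (\<lambda>_. borel) (src_family h z phi) (src_index K M)"
  shows "prob_space.expectation P (s_hat K M \<eta> c u \<mu> h z phi) = (\<Sum>k\<in>{1..K}. u k)
    \<and> prob_space.variance P (s_hat K M \<eta> c u \<mu> h z phi) =
           (\<Sum>m\<in>{1..M}. (c m)\<^sup>2) / (\<Sum>m\<in>{1..M}. c m)\<^sup>2
             * ((\<Sum>k\<in>{1..K}. upos (u k))\<^sup>2 + (\<Sum>k\<in>{1..K}. uneg (u k))\<^sup>2)
           + 2 * \<sigma>z2 / (\<eta> * (\<Sum>m\<in>{1..M}. c m)) * (\<Sum>k\<in>{1..K}. \<bar>u k\<bar>)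
           + 2 * real M * \<sigma>z2\<^sup>2 / (\<eta>\<^sup>2 * (\<Sum>m\<in>{1..M}. c m)\<^sup>2)"
proof -
  note P = assms(1) and eta = assms(4) and sig = assms(5) and mu = assms(6) and cpos = assms(7)
    and Cpos = assms(8) and dh = assms(9) and dz = assms(10) and dphi = assms(11) and ind = assms(12)
  interpret prob_space P by fact
  define Cs where "Cs = (\<Sum>m\<in>{1..M}. c m)"
  define Sp where "Sp = (\<Sum>k\<in>{1..K}. upos (u k))"
  define Sn where "Sn = (\<Sum>k\<in>{1..K}. uneg (u k))"
  define lam where "lam m b = \<eta> * c m * (if b then Sp else Sn) + \<sigma>z2" for m b
  define T where "T m b \<omega> = (cmod (rx K \<eta> c u \<mu> h z phi m b \<omega>))^2" for m b \<omega>
  have lam_eq: "(\<Sum>k\<in>{1..K}. \<eta> * c m * pm b (u k)) + \<sigma>z2 = lam m b" for m b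
    by (simp add: lam_def pm_def Sp_def Sn_def sum_distrib_left)
  have g: "good P (rx K \<eta> c u \<mu> h z phi m b) (lam m b)" if "m \<in> {1..M}" for m b
  proof -
    have "good P (rx K \<eta> c u \<mu> h z phi m b) ((\<Sum>k\<in>{1..K}. \<eta> * c m * pm b (u k)) + \<sigma>z2)"
      by (rule rx_good[OF P that eta sig mu _ dh dz dphi ind]) (use cpos that in auto)
    then show ?thesis by (simp only: lam_eq)
  qed
  have Tm[measurable]: "T m b \<in> borel_measurable P" if "m \<in> {1..M}" for m b
  proof -
    have [measurable]: "rx K \<eta> c u \<mu> h z phi m b \<in> borel_measurable P" using g[OF that, of b] by (simp add: good_def)
    show ?thesis unfolding T_def[abs_def] by measurable
  qed
  have Ti: "integrable P (T m b)" if "m \<in> {1..M}" for m b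
    unfolding T_def by (rule good_int[OF P g[OF that]]) (auto simp: cb)
  have T4: "(\<lambda>\<omega>. (T m b \<omega>)^2) = (\<lambda>\<omega>. cmod (rx K \<eta> c u \<mu> h z phi m b \<omega>) ^ 4)" for m b
    by (simp add: T_def fun_eq_iff flip: power_mult)
  have T2i: "integrable P (\<lambda>\<omega>. (T m b \<omega>)^2)" if "m \<in> {1..M}" for m b
    unfolding T4 using g[OF that] by (simp add: good_def)
  have ET: "(\<integral>\<omega>. T m b \<omega> \<partial>P) = lam m b" if "m \<in> {1..M}" for m b
    using g[OF that] by (simp add: good_def T_def)
  have ET2: "(\<integral>\<omega>. (T m b \<omega>)^2 \<partial>P) = 2 * (lam m b)\<^sup>2" if "m \<in> {1..M}" for m b
    unfolding T4 using g[OF that] by (simp add: good_def)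
  have shat: "s_hat K M \<eta> c u \<mu> h z phi = (\<lambda>\<omega>. 1 / (\<eta> * Cs) * (\<Sum>m\<in>{1..M}. T m True \<omega> - T m False \<omega>))"
    by (simp add: s_hat_def T_def Cs_def fun_eq_iff)
  have su: "Sp - Sn = (\<Sum>k\<in>{1..K}. u k)"
  proof -
    have "\<And>x::real. max x 0 - max (- x) 0 = x" by auto
    then show ?thesis by (simp add: Sp_def Sn_def upos_def uneg_def flip: sum_subtractf)
  qed
  have lamdiff: "(\<Sum>m\<in>{1..M}. lam m True - lam m False) = \<eta> * Cs * (Sp - Sn)"
    by (simp add: lam_def Cs_def sum_distrib_left sum_distrib_right algebra_simps flip: sum_subtractf)
  have Cs0: "Cs > 0" using Cpos by (simp add: Cs_def)
  have etaC: "\<eta> * Cs > 0" using eta Cpos by (simp add: Cs_def)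
  have Eshat: "expectation (s_hat K M \<eta> c u \<mu> h z phi) = (\<Sum>k\<in>{1..K}. u k)"
  proof -
    have "expectation (s_hat K M \<eta> c u \<mu> h z phi) = 1 / (\<eta> * Cs) * (\<Sum>m\<in>{1..M}. lam m True - lam m False)"
      unfolding shat using Ti ET by (simp add: Bochner_Integration.integral_sum Bochner_Integration.integral_diff)
    also have "\<dots> = Sp - Sn" unfolding lamdiff using Cs0 eta by simp
    finally show ?thesis by (simp add: su)
  qed
  define J where "J = {1..M} \<times> (UNIV :: bool set)"
  define sg where "sg b = (if b then 1 else -1 :: real)" for b
  define e where "e j \<omega> = sg (snd j) * (T (fst j) (snd j) \<omega> - lam (fst j) (snd j))" for j \<omega>
  have Jfin: "finite J" by (simp add: J_def)
  have sumJ: "(\<Sum>j\<in>J. f j) = (\<Sum>m\<in>{1..M}. f (m, True) + f (m, False))" for f :: "nat \<times> bool \<Rightarrow> real"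
  proof -
    have "(\<Sum>j\<in>J. f j) = (\<Sum>m\<in>{1..M}. \<Sum>b\<in>UNIV. f (m, b))"
      unfolding J_def by (subst sum.cartesian_product) simp
    then show ?thesis by (simp add: UNIV_bool add.commute)
  qed
  have sg2: "(sg b)\<^sup>2 = 1" for b by (simp add: sg_def)
  have dev: "s_hat K M \<eta> c u \<mu> h z phi \<omega> - (\<Sum>k\<in>{1..K}. u k) = 1 / (\<eta> * Cs) * (\<Sum>j\<in>J. e j \<omega>)" for \<omega>
  proof -
    have "(\<Sum>j\<in>J. e j \<omega>) = (\<Sum>m\<in>{1..M}. (T m True \<omega> - T m False \<omega>) - (lam m True - lam m False))"
      by (simp add: sumJ e_def sg_def algebra_simps)
    also have "\<dots> = (\<Sum>m\<in>{1..M}. T m True \<omega> - T m False \<omega>) - \<eta> * Cs * (Sp - Sn)"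
      unfolding sum_subtractf[of "\<lambda>m. T m True \<omega> - T m False \<omega>" "\<lambda>m. lam m True - lam m False"] lamdiff ..
    finally have B: "(\<Sum>j\<in>J. e j \<omega>) = (\<Sum>m\<in>{1..M}. T m True \<omega> - T m False \<omega>) - \<eta> * Cs * (Sp - Sn)" .
    have ne: "\<eta> * Cs \<noteq> 0" using etaC by (metis less_irrefl)
    show ?thesis unfolding shat su[symmetric] B using ne by (simp add: right_diff_distrib)
  qed
  have eJ: "fst j \<in> {1..M}" if "j \<in> J" for j using that by (auto simp: J_def)
  have em: "e j \<in> borel_measurable P" if "j \<in> J" for j
    using Tm[OF eJ[OF that]] unfolding e_def[abs_def] by measurable
  have ei: "integrable P (e j)" if "j \<in> J" for j
    using Ti[OF eJ[OF that]] unfolding e_def[abs_def] by simp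
  have e2eq: "(\<lambda>\<omega>. (e j \<omega>)^2) = (\<lambda>\<omega>. (T (fst j) (snd j) \<omega>)^2 - 2 * lam (fst j) (snd j) * T (fst j) (snd j) \<omega> + (lam (fst j) (snd j))^2)" for j
    by (simp add: e_def fun_eq_iff power_mult_distrib sg2 power2_diff)
  have e2i: "integrable P (\<lambda>\<omega>. (e j \<omega>)^2)" if "j \<in> J" for j
    unfolding e2eq using Ti[OF eJ[OF that]] T2i[OF eJ[OF that]] by simp
  have e0: "(\<integral>\<omega>. e j \<omega> \<partial>P) = 0" if "j \<in> J" for j
    using Ti[OF eJ[OF that]] ET[OF eJ[OF that]] unfolding e_def by (simp add: prob_space)
  have Ee2: "(\<integral>\<omega>. (e j \<omega>)^2 \<partial>P) = (lam (fst j) (snd j))^2" if "j \<in> J" for j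
    unfolding e2eq using Ti[OF eJ[OF that]] T2i[OF eJ[OF that]] ET[OF eJ[OF that]] ET2[OF eJ[OF that]]
    by (simp add: Bochner_Integration.integral_diff Bochner_Integration.integral_add prob_space power2_eq_square)
  have indep: "indep_var borel (e i) borel (e j)" if "i \<in> J" "j \<in> J" "i \<noteq> j" for i j
  proof -
    define dfun where "dfun j x = sg (snd j) * ((cmod (yfun \<eta> c u \<mu> (fst j) (snd j) {1..K} x))^2 - lam (fst j) (snd j))"
      for j :: "nat \<times> bool" and x
    have eq: "e j = (\<lambda>\<omega>. dfun j (restrict (\<lambda>i. src_family h z phi i \<omega>) (Grp (fst j) (snd j) {1..K})))" for j
      by (simp add: fun_eq_iff e_def dfun_def T_def yfun_eq rx_def)
    have meas: "dfun j \<in> borel_measurable (PiM (Grp (fst j) (snd j) {1..K}) (\<lambda>_. borel))" for j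
    proof -
      have [measurable]: "yfun \<eta> c u \<mu> (fst j) (snd j) {1..K} \<in> borel_measurable (PiM (Grp (fst j) (snd j) {1..K}) (\<lambda>_. borel))"
        by (rule yfun_meas)
      show ?thesis unfolding dfun_def[abs_def] by measurable
    qed
    have disj: "Grp (fst i) (snd i) {1..K} \<inter> Grp (fst j) (snd j) {1..K} = {}"
      using that(3) by (cases i, cases j) (auto simp: Grp_def)
    have sub: "Grp (fst j) (snd j) {1..K} \<subseteq> src_index K M" if "j \<in> J" for j
      using eJ[OF that] by (auto simp: Grp_def src_index_def)
    show ?thesis unfolding eq
      by (rule indep_groups[OF P ind disj sub[OF that(1)] sub[OF that(2)] meas meas])
  qed
  have Var: "(\<integral>\<omega>. (\<Sum>j\<in>J. e j \<omega>)^2 \<partial>P) = (\<Sum>j\<in>J. (lam (fst j) (snd j))^2)"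
    using var_sum[OF P Jfin em ei e2i e0 indep] Ee2 by simp
  have "variance (s_hat K M \<eta> c u \<mu> h z phi) = (\<integral>\<omega>. (1 / (\<eta> * Cs))^2 * (\<Sum>j\<in>J. e j \<omega>)^2 \<partial>P)"
    unfolding Eshat dev by (simp only: power_mult_distrib)
  also have "\<dots> = (1 / (\<eta> * Cs))^2 * (\<Sum>m\<in>{1..M}. (lam m True)^2 + (lam m False)^2)"
    by (simp only: integral_mult_right_zero Var) (simp only: sumJ fst_conv snd_conv)
  also have "\<dots> = (\<Sum>m\<in>{1..M}. (c m)\<^sup>2) / Cs\<^sup>2 * (Sp\<^sup>2 + Sn\<^sup>2) + 2 * \<sigma>z2 / (\<eta> * Cs) * (Sp + Sn)
           + 2 * real M * \<sigma>z2\<^sup>2 / (\<eta>\<^sup>2 * Cs\<^sup>2)"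
  proof -
    have "(\<Sum>m\<in>{1..M}. (lam m True)^2 + (lam m False)^2) =
      (\<Sum>m\<in>{1..M}. \<eta>\<^sup>2 * (Sp\<^sup>2 + Sn\<^sup>2) * (c m)\<^sup>2 + 2 * \<eta> * \<sigma>z2 * (Sp + Sn) * c m + 2 * \<sigma>z2\<^sup>2)"
      by (intro sum.cong refl) (simp add: lam_def power2_eq_square algebra_simps)
    also have "\<dots> = \<eta>\<^sup>2 * (Sp\<^sup>2 + Sn\<^sup>2) * (\<Sum>m\<in>{1..M}. (c m)\<^sup>2) + 2 * \<eta> * \<sigma>z2 * (Sp + Sn) * Cs + 2 * real M * \<sigma>z2\<^sup>2"
      by (simp add: sum.distrib sum_distrib_left Cs_def)
    finally show ?thesis using eta Cs0 by (simp add: field_simps power2_eq_square)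
  qed
  finally have V: "variance (s_hat K M \<eta> c u \<mu> h z phi) = (\<Sum>m\<in>{1..M}. (c m)\<^sup>2) / Cs\<^sup>2 * (Sp\<^sup>2 + Sn\<^sup>2) + 2 * \<sigma>z2 / (\<eta> * Cs) * (Sp + Sn)
           + 2 * real M * \<sigma>z2\<^sup>2 / (\<eta>\<^sup>2 * Cs\<^sup>2)" .
  have sabs: "(\<Sum>k\<in>{1..K}. \<bar>u k\<bar>) = Sp + Sn"
  proof -
    have "\<And>x::real. \<bar>x\<bar> = max x 0 + max (- x) 0" by auto
    then show ?thesis by (simp add: Sp_def Sn_def upos_def uneg_def flip: sum.distrib)
  qed
  show ?thesis using Eshat V unfolding sabs Cs_def Sp_def Sn_def by simp
qed

end
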